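(* Let $\Delta$ be an S-map and $\mu$ a real number. Suppose every maximal semisimple S-submap of $\Delta$ satisfies the condition $\mathcal X(\mu)$. Let $S$ be the number of selected external edges of $\Delta$. Then $$S\ge(1-2\mu)\sum_{\Pi\in\Delta(2)}|\partial\Pi|.$$
   Context: A map is a connected subcomplex of an oriented combinatorial 2-sphere together with a set of cycles (its contours) such that each oriented edge lies either in the boundary cycle $\partial\Pi$ of some face $\Pi$ or in a contour of the map (and each oriented edge of the complex is counted once in the union of face boundaries and contours). $\Delta(1)$ and $\Delta(2)$ denote the sets of edges and faces; $|\partial\Pi|$ is the length of the boundary cycle of $\Pi$; $\|X\|$ is cardinality. An edge is external if at least one of its orientations lies on a contour of the map. A selection on a map is a set of nontrivial reduced subpaths of boundary cycles of faces, closed under taking nontrivial subpaths; an S-map is a map with a selection. An external edge is selected if an orientation of it lying on the boundary of a face is a selected path. A map is semisimple if every edge is incident to a face. A semisimple S-map $\Delta$ satisfies $\mathcal X(\mu)$ if the number $S$ of its selected external edges satisfies $S\ge\|\Delta(1)\|-\mu\sum_{\Pi\in\Delta(2)}|\partial\Pi|$. The maximal semisimple S-submaps of $\Delta$ are the S-submaps given by the connected components of the complex obtained from $\Delta$ by deleting all edges not incident to any face (with the induced contours and selection). *)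

theory Defs
  imports Complex_Main "HOL-Library.Sublist"
begin

text \<open>Darts = oriented edges; srev = orientation reversal; snxt d = the dart
following d along the boundary cycle of the face on whose boundary d lies;
stail d = initial vertex of d.\<close>

record ('v, 'd) sphere =
  sdarts :: "'d set"
  srev   :: "'d \<Rightarrow> 'd"
  snxt   :: "'d \<Rightarrow> 'd"
  stail  :: "'d \<Rightarrow> 'v"

definition shead :: "('v,'d) sphere \<Rightarrow> 'd \<Rightarrow> 'v" where
  "shead S d = stail S (srev S d)"

definition srot :: "('v,'d) sphere \<Rightarrow> 'd \<Rightarrow> 'd" where
  "srot S d = snxt S (srev S d)"

definition dart_orbit :: "('d \<Rightarrow> 'd) \<Rightarrow> 'd \<Rightarrow> 'd set" where
  "dart_orbit f d = {(f ^^ n) d | n. True}"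

definition sphere_faces :: "('v,'d) sphere \<Rightarrow> 'd set set" where
  "sphere_faces S = {dart_orbit (snxt S) d | d. d \<in> sdarts S}"

definition sphere_edges :: "('v,'d) sphere \<Rightarrow> 'd set set" where
  "sphere_edges S = {{d, srev S d} | d. d \<in> sdarts S}"

definition sphere_verts :: "('v,'d) sphere \<Rightarrow> 'v set" where
  "sphere_verts S = stail S ` sdarts S"

definition skel :: "('v,'d) sphere \<Rightarrow> 'd set \<Rightarrow> ('v \<times> 'v) set" where
  "skel S D = {(stail S d, shead S d) | d. d \<in> D}"

definition comb_sphere :: "('v,'d) sphere \<Rightarrow> bool" where
  "comb_sphere S \<longleftrightarrow>
     finite (sdarts S) \<and> sdarts S \<noteq> {} \<and>
     (\<forall>d\<in>sdarts S. srev S d \<in> sdarts S \<and> srev S (srev S d) = d \<and> srev S d \<noteq> d) \<and>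
     bij_betw (snxt S) (sdarts S) (sdarts S) \<and>
     (\<forall>d\<in>sdarts S. stail S (snxt S d) = shead S d) \<and>
     (\<forall>d\<in>sdarts S. \<forall>d'\<in>sdarts S. stail S d = stail S d' \<longleftrightarrow> d' \<in> dart_orbit (srot S) d) \<and>
     (\<forall>v\<in>sphere_verts S. \<forall>w\<in>sphere_verts S. (v, w) \<in> (skel S (sdarts S))\<^sup>*) \<and>
     int (card (sphere_verts S)) - int (card (sphere_edges S)) + int (card (sphere_faces S)) = 2"

text \<open>The boundary cycle of
a face \<Pi> is its snxt-orbit, so the length of the boundary cycle is card \<Pi>.
msel is the selection (a set of paths, i.e. dart lists).\<close>

record ('v, 'd) smap =
  mverts    :: "'v set"
  mdarts    :: "'d set"
  mfaces    :: "'d set set"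
  mcontours :: "'d list list"
  msel      :: "'d list set"

definition closed_path :: "('v,'d) sphere \<Rightarrow> 'd set \<Rightarrow> 'd list \<Rightarrow> bool" where
  "closed_path S D c \<longleftrightarrow> set c \<subseteq> D \<and>
     (\<forall>i<length c. shead S (c ! i) = stail S (c ! ((i + 1) mod length c)))"

definition is_map :: "('v,'d) sphere \<Rightarrow> ('v,'d) smap \<Rightarrow> bool" where
  "is_map S M \<longleftrightarrow>
     comb_sphere S \<and>
     mdarts M \<subseteq> sdarts S \<and> (\<forall>d\<in>mdarts M. srev S d \<in> mdarts M) \<and>
     mverts M \<subseteq> sphere_verts S \<and> (\<forall>d\<in>mdarts M. stail S d \<in> mverts M) \<and>
     mfaces M \<subseteq> sphere_faces S \<and> (\<forall>\<Pi>\<in>mfaces M. \<Pi> \<subseteq> mdarts M) \<and>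
     mverts M \<noteq> {} \<and>
     (\<forall>v\<in>mverts M. \<forall>w\<in>mverts M. (v, w) \<in> (skel S (mdarts M))\<^sup>*) \<and>
     (\<forall>c\<in>set (mcontours M). closed_path S (mdarts M) c) \<and>
     (\<forall>d\<in>mdarts M. (if d \<in> \<Union>(mfaces M) then 1 else 0)
                     + (\<Sum>c\<leftarrow>mcontours M. count_list c d) = (1::nat))"

definition face_path :: "('v,'d) sphere \<Rightarrow> 'd \<Rightarrow> nat \<Rightarrow> 'd list" where
  "face_path S d m = map (\<lambda>i. (snxt S ^^ i) d) [0..<m]"

definition subpath_of_bd :: "('v,'d) sphere \<Rightarrow> 'd set \<Rightarrow> 'd list \<Rightarrow> bool" where
  "subpath_of_bd S \<Pi> p \<longleftrightarrow> (\<exists>d\<in>\<Pi>. \<exists>m. 1 \<le> m \<and> m \<le> card \<Pi> \<and> p = face_path S d m)"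

definition reduced_path :: "('v,'d) sphere \<Rightarrow> 'd list \<Rightarrow> bool" where
  "reduced_path S p \<longleftrightarrow> (\<forall>i. Suc i < length p \<longrightarrow> p ! Suc i \<noteq> srev S (p ! i))"

definition is_selection :: "('v,'d) sphere \<Rightarrow> ('v,'d) smap \<Rightarrow> bool" where
  "is_selection S M \<longleftrightarrow>
     (\<forall>p\<in>msel M. (\<exists>\<Pi>\<in>mfaces M. subpath_of_bd S \<Pi> p) \<and> reduced_path S p) \<and>
     (\<forall>p\<in>msel M. \<forall>q. q \<noteq> [] \<and> sublist q p \<longrightarrow> q \<in> msel M)"

definition is_smap :: "('v,'d) sphere \<Rightarrow> ('v,'d) smap \<Rightarrow> bool" where
  "is_smap S M \<longleftrightarrow> is_map S M \<and> is_selection S M"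

definition map_edges :: "('v,'d) sphere \<Rightarrow> ('v,'d) smap \<Rightarrow> 'd set set" where
  "map_edges S M = {{d, srev S d} | d. d \<in> mdarts M}"

definition external_edge :: "('v,'d) sphere \<Rightarrow> ('v,'d) smap \<Rightarrow> 'd set \<Rightarrow> bool" where
  "external_edge S M e \<longleftrightarrow> (\<exists>d\<in>e. \<exists>c\<in>set (mcontours M). d \<in> set c)"

definition sel_ext_edges :: "('v,'d) sphere \<Rightarrow> ('v,'d) smap \<Rightarrow> 'd set set" where
  "sel_ext_edges S M = {e \<in> map_edges S M. external_edge S M e \<and>
       (\<exists>d\<in>e. d \<in> \<Union>(mfaces M) \<and> [d] \<in> msel M)}"

definition semisimple :: "('v,'d) sphere \<Rightarrow> ('v,'d) smap \<Rightarrow> bool" where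
  "semisimple S M \<longleftrightarrow> (\<forall>d\<in>mdarts M. d \<in> \<Union>(mfaces M) \<or> srev S d \<in> \<Union>(mfaces M))"

definition satisfies_X :: "real \<Rightarrow> ('v,'d) sphere \<Rightarrow> ('v,'d) smap \<Rightarrow> bool" where
  "satisfies_X \<mu> S M \<longleftrightarrow> semisimple S M \<and>
     real (card (sel_ext_edges S M)) \<ge>
       real (card (map_edges S M)) - \<mu> * (\<Sum>\<Pi>\<in>mfaces M. real (card \<Pi>))"

definition ss_darts :: "('v,'d) sphere \<Rightarrow> ('v,'d) smap \<Rightarrow> 'd set" where
  "ss_darts S M = {d \<in> mdarts M. d \<in> \<Union>(mfaces M) \<or> srev S d \<in> \<Union>(mfaces M)}"

definition ss_components :: "('v,'d) sphere \<Rightarrow> ('v,'d) smap \<Rightarrow> 'v set set" where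
  "ss_components S M =
     {{w \<in> mverts M. (v, w) \<in> (skel S (ss_darts S M))\<^sup>*} | v. v \<in> mverts M}"

definition comp_submap :: "('v,'d) sphere \<Rightarrow> ('v,'d) smap \<Rightarrow> 'v set \<Rightarrow> ('v,'d) smap \<Rightarrow> bool" where
  "comp_submap S M C N \<longleftrightarrow>
     mverts N = C \<and>
     mdarts N = {d \<in> ss_darts S M. stail S d \<in> C} \<and>
     mfaces N = {\<Pi> \<in> mfaces M. \<Pi> \<subseteq> mdarts N} \<and>
     msel N = {p \<in> msel M. \<exists>\<Pi>\<in>mfaces N. subpath_of_bd S \<Pi> p} \<and>
     is_smap S N"

end

theory Submission
  imports Defs
begin


lemma funpow_period:
  assumes b: "bij_betw f D D" and fin: "finite D" and d: "d \<in> D"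
  shows "\<exists>k>0. (f ^^ k) d = d"
proof -
  have "\<not> inj (\<lambda>n::nat. (f ^^ n) d)"
  proof
    assume "inj (\<lambda>n::nat. (f ^^ n) d)"
    moreover have "range (\<lambda>n::nat. (f ^^ n) d) \<subseteq> D"
      using bij_betw_funpow[OF b] d by (auto intro: bij_betw_apply)
    ultimately show False using fin
      by (meson finite_imageD finite_subset infinite_UNIV_nat)
  qed
  then obtain i j where ij: "i \<noteq> j" "(f ^^ i) d = (f ^^ j) d" unfolding inj_def by blast
  have gen: "\<exists>k>0. (f ^^ k) d = d" if "i < j" "(f ^^ i) d = (f ^^ j) d" for i j
  proof -
    have "(f ^^ j) d = (f ^^ i) ((f ^^ (j - i)) d)"
      using that by (metis funpow_add le_less o_apply le_add_diff_inverse)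
    moreover have "(f ^^ (j - i)) d \<in> D" using bij_betw_funpow[OF b] d by (auto intro: bij_betw_apply)
    moreover have "inj_on (f ^^ i) D" using bij_betw_funpow[OF b] bij_betw_def by blast
    ultimately have "(f ^^ (j - i)) d = d" using that d by (metis inj_on_def)
    thus ?thesis using that by (intro exI[of _ "j - i"]) auto
  qed
  show ?thesis using ij gen by (metis linorder_neqE_nat)
qed

lemma orbit_eq:
  assumes b: "bij_betw f D D" and fin: "finite D" and d: "d \<in> D"
    and x: "x \<in> dart_orbit f d"
  shows "dart_orbit f x = dart_orbit f d"
proof -
  obtain n where xn: "x = (f ^^ n) d" using x unfolding dart_orbit_def by blast
  obtain k where k: "k > 0" "(f ^^ k) d = d" using funpow_period[OF b fin d] by blast
  have per: "(f ^^ (k * m)) d = d" for m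
    by (induction m) (auto simp: funpow_add k(2) simp del: funpow.simps)
  have "dart_orbit f x \<subseteq> dart_orbit f d"
  proof
    fix y assume "y \<in> dart_orbit f x"
    then obtain m where y: "y = (f ^^ m) x" unfolding dart_orbit_def by blast
    have "y = (f ^^ (m + n)) d" unfolding y xn by (simp add: funpow_add)
    thus "y \<in> dart_orbit f d" unfolding dart_orbit_def by blast
  qed
  moreover have "dart_orbit f d \<subseteq> dart_orbit f x"
  proof
    fix y assume "y \<in> dart_orbit f d"
    then obtain m where y: "y = (f ^^ m) d" unfolding dart_orbit_def by blast
    have kn: "k * n \<ge> n" using k(1) by simp
    have "(f ^^ (m + (k * n - n))) x = (f ^^ (m + (k*n - n) + n)) d" unfolding xn
      by (simp add: funpow_add)
    also have "m + (k*n - n) + n = m + k * n" using kn by linarith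
    also have "(f ^^ (m + k * n)) d = (f ^^ m) ((f ^^ (k*n)) d)" by (simp add: funpow_add)
    also have "\<dots> = y" using per y by simp
    finally show "y \<in> dart_orbit f x" unfolding dart_orbit_def by blast
  qed
  ultimately show ?thesis by blast
qed

lemma faces_disjoint:
  assumes "comb_sphere S" "A \<in> sphere_faces S" "B \<in> sphere_faces S" "A \<noteq> B"
  shows "disjnt A B"
proof -
  have b: "bij_betw (snxt S) (sdarts S) (sdarts S)" and fin: "finite (sdarts S)"
    using assms(1) unfolding comb_sphere_def by auto
  obtain a b' where a: "a \<in> sdarts S" "A = dart_orbit (snxt S) a"
    and bb: "b' \<in> sdarts S" "B = dart_orbit (snxt S) b'"
    using assms(2,3) unfolding sphere_faces_def by blast
  show ?thesis
  proof (rule ccontr)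
    assume "\<not> disjnt A B"
    then obtain x where "x \<in> A" "x \<in> B" unfolding disjnt_def by blast
    then show False using orbit_eq[OF b fin a(1)] orbit_eq[OF b fin bb(1)] a bb assms(4) by metis
  qed
qed



lemma is_mapD:
  assumes "is_map S M"
  shows "comb_sphere S" "mdarts M \<subseteq> sdarts S" "\<forall>d\<in>mdarts M. srev S d \<in> mdarts M"
    "\<forall>d\<in>mdarts M. stail S d \<in> mverts M"
    "mfaces M \<subseteq> sphere_faces S" "\<forall>\<Pi>\<in>mfaces M. \<Pi> \<subseteq> mdarts M"
    "\<forall>c\<in>set (mcontours M). closed_path S (mdarts M) c"
    "\<forall>d\<in>mdarts M. (if d \<in> \<Union>(mfaces M) then 1 else 0)
                     + (\<Sum>c\<leftarrow>mcontours M. count_list c d) = (1::nat)"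
  using assms unfolding is_map_def apply -
  apply (elim conjE, assumption)+
  done

lemma comb_sphereD:
  assumes "comb_sphere S"
  shows "finite (sdarts S)"
    "\<forall>d\<in>sdarts S. srev S d \<in> sdarts S \<and> srev S (srev S d) = d \<and> srev S d \<noteq> d"
    "bij_betw (snxt S) (sdarts S) (sdarts S)"
    "\<forall>d\<in>sdarts S. stail S (snxt S d) = shead S d"
  using assms unfolding comb_sphere_def apply -
  apply (elim conjE, assumption)+
  done

lemma sum_count_pos:
  assumes "(\<Sum>c\<leftarrow>cs. count_list c d) = (1::nat)"
  shows "\<exists>c\<in>set cs. d \<in> set c"
proof (rule ccontr)
  assume "\<not> ?thesis"
  hence "\<forall>c\<in>set cs. count_list c d = 0" by (simp add: count_list_0_iff)
  hence "(\<Sum>c\<leftarrow>cs. count_list c d) = 0" by (induction cs) auto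
  thus False using assms by simp
qed

lemma on_contour_not_face:
  assumes "is_map S N" "d \<in> mdarts N" "c \<in> set (mcontours N)" "d \<in> set c"
  shows "d \<notin> \<Union>(mfaces N)"
proof
  assume f: "d \<in> \<Union>(mfaces N)"
  have eq: "(if d \<in> \<Union>(mfaces N) then 1 else 0) + (\<Sum>c\<leftarrow>mcontours N. count_list c d) = (1::nat)"
    using is_mapD(8)[OF assms(1)] assms(2) by blast
  have "count_list c d > 0" using assms(4) by (metis count_list_0_iff gr0I)
  moreover have "count_list c d \<le> (\<Sum>c\<leftarrow>mcontours N. count_list c d)"
    using assms(3) by (simp add: member_le_sum_list)
  moreover have "1 + (\<Sum>c\<leftarrow>mcontours N. count_list c d) = (1::nat)"
    using eq f by (simp only: f if_True)
  ultimately show False by linarith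
qed

lemma arith_aux:
  fixes s E m F Dr :: real
  assumes "s \<ge> E - m*F" "Dr \<le> 2*E" "s \<le> Dr - F"
  shows "(1-2*m)*F \<le> s"
proof -
  have "(1-2*m)*F = F - 2*(m*F)" by (simp add: algebra_simps)
  thus ?thesis using assms by linarith
qed

lemma edge_eq:
  assumes "r (r a) = a" "r (r b) = b" "x \<in> {a, r a}" "x \<in> {b, r b}"
  shows "{a, r a} = {b, r b}"
proof -
  have "x = a \<or> x = r a" "x = b \<or> x = r b" using assms(3,4) by blast+
  thus ?thesis using assms(1,2) by (metis insert_commute)
qed

lemma comp_bound:
  assumes sm: "is_smap S N" and X: "satisfies_X \<mu> S N"
  shows "real (card (sel_ext_edges S N)) \<ge> (1 - 2 * \<mu>) * (\<Sum>\<Pi>\<in>mfaces N. real (card \<Pi>))"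
proof -
  have m: "is_map S N" using sm unfolding is_smap_def by blast
  have cs: "comb_sphere S" using is_mapD(1)[OF m] .
  define D where "D = mdarts N"
  define F where "F = \<Union>(mfaces N)"
  have revc: "\<forall>d\<in>D. srev S d \<in> D" using is_mapD(3)[OF m] unfolding D_def .
  have DS: "D \<subseteq> sdarts S" using is_mapD(2)[OF m] unfolding D_def .
  have finS: "finite (sdarts S)" using comb_sphereD(1)[OF cs] .
  have finD: "finite D" using DS finS finite_subset by blast
  have FD: "F \<subseteq> D" using is_mapD(6)[OF m] unfolding F_def D_def by blast
  have finF: "finite F" using FD finD finite_subset by blast
  have facesS: "mfaces N \<subseteq> sphere_faces S" using is_mapD(5)[OF m] .
  have finfaces: "finite (mfaces N)" using finF unfolding F_def by (meson finite_UnionD)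
  have h1: "(\<Sum>\<Pi>\<in>mfaces N. card \<Pi>) = card F"
    unfolding F_def
  proof (rule card_Union_disjoint[symmetric])
    show "pairwise disjnt (mfaces N)"
      unfolding pairwise_def using faces_disjoint[OF cs] facesS by blast
    show "\<And>A. A \<in> mfaces N \<Longrightarrow> finite A" using finF F_def
      by (meson Sup_upper finite_subset)
  qed
  have h2: "card D \<le> 2 * card (map_edges S N)"
  proof -
    have "D = \<Union>(map_edges S N)" using revc unfolding map_edges_def D_def by blast
    hence "card D \<le> card (\<Union>(map_edges S N))" by simp
    also have "\<dots> \<le> sum card (map_edges S N)" by (rule card_Union_le_sum_card)
    also have "\<dots> \<le> sum (\<lambda>_. 2) (map_edges S N)"
    proof (rule sum_mono)
      fix e assume "e \<in> map_edges S N"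
      then obtain d where "e = {d, srev S d}" unfolding map_edges_def by blast
      thus "card e \<le> 2" by (simp add: card_insert_le_m1)
    qed
    finally show ?thesis by simp
  qed
  define g where "g e = (SOME x. x \<in> e \<and> (\<exists>c\<in>set (mcontours N). x \<in> set c))" for e
  have h3: "card (sel_ext_edges S N) \<le> card (D - F)"
  proof (rule card_inj_on_le)
    have gp: "g e \<in> e \<and> (\<exists>c\<in>set (mcontours N). g e \<in> set c)" if "e \<in> sel_ext_edges S N" for e
    proof -
      have "\<exists>x. x \<in> e \<and> (\<exists>c\<in>set (mcontours N). x \<in> set c)"
        using that unfolding sel_ext_edges_def external_edge_def by blast
      thus ?thesis unfolding g_def by (rule someI_ex)
    qed
    have eD: "e \<subseteq> D" if "e \<in> sel_ext_edges S N" for e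
      using that revc unfolding sel_ext_edges_def map_edges_def D_def by blast
    show "inj_on g (sel_ext_edges S N)"
    proof (rule inj_onI)
      fix e e' assume e: "e \<in> sel_ext_edges S N" and e': "e' \<in> sel_ext_edges S N" and "g e = g e'"
      then have "g e \<in> e" "g e \<in> e'" using gp[OF e] gp[OF e'] by auto
      moreover obtain a where a: "e = {a, srev S a}" "a \<in> D" using e unfolding sel_ext_edges_def map_edges_def D_def by blast
      moreover obtain b where b: "e' = {b, srev S b}" "b \<in> D" using e' unfolding sel_ext_edges_def map_edges_def D_def by blast
      moreover have rr: "\<forall>d\<in>sdarts S. srev S (srev S d) = d" using comb_sphereD(2)[OF cs] by blast
      moreover have "srev S (srev S a) = a" "srev S (srev S b) = b" using rr a(2) b(2) DS by auto
      ultimately show "e = e'" using edge_eq[of "srev S" a b "g e"] by simp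
    qed
    show "g ` sel_ext_edges S N \<subseteq> D - F"
    proof
      fix y assume "y \<in> g ` sel_ext_edges S N"
      then obtain e where e: "e \<in> sel_ext_edges S N" "y = g e" by blast
      then obtain c where c: "c \<in> set (mcontours N)" "y \<in> set c" "y \<in> e" using gp by blast
      have "y \<in> D" using eD e c by blast
      moreover have "y \<notin> F" using on_contour_not_face[OF m _ c(1,2)] \<open>y \<in> D\<close> unfolding F_def D_def by blast
      ultimately show "y \<in> D - F" by blast
    qed
    show "finite (D - F)" using finD by blast
  qed
  have h4: "card (D - F) = card D - card F" using FD finF by (simp add: card_Diff_subset)
  have cF: "card F \<le> card D" using FD finD card_mono by blast
  have Xi: "real (card (sel_ext_edges S N)) \<ge> real (card (map_edges S N)) - \<mu> * (\<Sum>\<Pi>\<in>mfaces N. real (card \<Pi>))"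
    using X unfolding satisfies_X_def by blast
  have sF: "(\<Sum>\<Pi>\<in>mfaces N. real (card \<Pi>)) = real (card F)"
  proof -
    have "(\<Sum>\<Pi>\<in>mfaces N. real (card \<Pi>)) = real (\<Sum>\<Pi>\<in>mfaces N. card \<Pi>)" by (rule of_nat_sum[symmetric])
    also have "\<dots> = real (card F)" using h1 by (rule arg_cong)
    finally show ?thesis .
  qed
  have r3: "real (card (sel_ext_edges S N)) \<le> real (card D) - real (card F)"
  proof -
    have "card (sel_ext_edges S N) + card F \<le> card D" using h3 h4 cF by linarith
    hence "real (card (sel_ext_edges S N) + card F) \<le> real (card D)" by (rule of_nat_mono)
    thus ?thesis by simp
  qed
  have r2: "real (card D) \<le> 2 * real (card (map_edges S N))"
  proof -
    have "real (card D) \<le> real (2 * card (map_edges S N))" using h2 by (rule of_nat_mono)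
    thus ?thesis by simp
  qed
  have e: "(1 - 2 * \<mu>) * real (card F) = real (card F) - 2 * (\<mu> * real (card F))"
    by (simp add: algebra_simps)
  show ?thesis unfolding sF by (rule arith_aux[OF Xi[unfolded sF] r2 r3])
qed



lemma sym_skel:
  assumes m: "is_map S M"
  shows "sym (skel S (ss_darts S M))"
proof (rule symI)
  fix a b assume "(a, b) \<in> skel S (ss_darts S M)"
  then obtain d where d: "d \<in> ss_darts S M" "a = stail S d" "b = shead S d" unfolding skel_def by blast
  have dm: "d \<in> mdarts M" using d(1) unfolding ss_darts_def by blast
  have ds: "d \<in> sdarts S" using dm is_mapD(2)[OF m] by blast
  have rr: "srev S (srev S d) = d" using comb_sphereD(2)[OF is_mapD(1)[OF m]] ds by blast
  have "srev S d \<in> mdarts M" using is_mapD(3)[OF m] dm by blast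
  hence "srev S d \<in> ss_darts S M" using d(1) rr unfolding ss_darts_def by auto
  moreover have "b = stail S (srev S d)" using d(3) unfolding shead_def .
  moreover have "a = shead S (srev S d)" using d(2) rr unfolding shead_def by simp
  ultimately show "(b, a) \<in> skel S (ss_darts S M)" unfolding skel_def by blast
qed

definition compv where
  "compv S M v = {w \<in> mverts M. (v, w) \<in> (skel S (ss_darts S M))\<^sup>*}"

lemma ss_components_eq: "ss_components S M = compv S M ` mverts M"
  unfolding ss_components_def compv_def by blast

lemma compv_eq:
  assumes m: "is_map S M" and w: "w \<in> compv S M v"
  shows "compv S M w = compv S M v"
proof -
  let ?R = "skel S (ss_darts S M)"
  have vw: "(v, w) \<in> ?R\<^sup>*" using w unfolding compv_def by blast
  have wv: "(w, v) \<in> ?R\<^sup>*" using vw sym_rtrancl[OF sym_skel[OF m]] unfolding sym_def by blast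
  show ?thesis
  proof (rule set_eqI)
    fix u
    have "(w, u) \<in> ?R\<^sup>* \<longleftrightarrow> (v, u) \<in> ?R\<^sup>*"
    proof
      assume "(w, u) \<in> ?R\<^sup>*" thus "(v, u) \<in> ?R\<^sup>*" using vw by (rule rtrancl_trans[rotated])
    next
      assume "(v, u) \<in> ?R\<^sup>*" thus "(w, u) \<in> ?R\<^sup>*" using wv by (rule rtrancl_trans[rotated])
    qed
    thus "u \<in> compv S M w \<longleftrightarrow> u \<in> compv S M v" unfolding compv_def by blast
  qed
qed

lemma comps_disj:
  assumes m: "is_map S M" and C: "C \<in> ss_components S M" and C': "C' \<in> ss_components S M"
    and x: "x \<in> C" "x \<in> C'"
  shows "C = C'"
proof -
  obtain v where v: "C = compv S M v" using C unfolding ss_components_eq by (rule imageE)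
  obtain v' where v': "C' = compv S M v'" using C' unfolding ss_components_eq by (rule imageE)
  have "x \<in> compv S M v" using x(1) v by blast
  hence e1: "C = compv S M x" using v compv_eq[OF m, of x v, symmetric] by (metis)
  have "x \<in> compv S M v'" using x(2) v' by blast
  hence e2: "C' = compv S M x" using v' compv_eq[OF m, of x v', symmetric] by (metis)
  show ?thesis using e1 e2 by (rule trans[OF _ sym])
qed

lemma face_in_comp:
  assumes m: "is_map S M" and P: "\<Pi> \<in> mfaces M" and d: "d \<in> \<Pi>"
  shows "\<Pi> \<subseteq> {x \<in> ss_darts S M. stail S x \<in> compv S M (stail S d)}"
proof -
  let ?R = "skel S (ss_darts S M)"
  let ?f = "snxt S"
  have cs: "comb_sphere S" using is_mapD(1)[OF m] .
  have b: "bij_betw ?f (sdarts S) (sdarts S)" and fin: "finite (sdarts S)"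
    using comb_sphereD[OF cs] by auto
  obtain a where a: "a \<in> sdarts S" "\<Pi> = dart_orbit ?f a"
    using P is_mapD(5)[OF m] unfolding sphere_faces_def by blast
  have Pm: "\<Pi> \<subseteq> mdarts M" using P is_mapD(6)[OF m] by blast
  have Pss: "\<Pi> \<subseteq> ss_darts S M" using Pm P unfolding ss_darts_def by blast
  have Pd: "\<Pi> = dart_orbit ?f d" using orbit_eq[OF b fin a(1)] d a(2) by simp
  have ds: "d \<in> sdarts S" using d Pm is_mapD(2)[OF m] by blast
  have step: "(?f ^^ n) d \<in> \<Pi> \<and> (stail S d, stail S ((?f ^^ n) d)) \<in> ?R\<^sup>*" for n
  proof (induction n)
    case 0 then show ?case using d by simp
  next
    case (Suc n)
    let ?y = "(?f ^^ n) d"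
    have yP: "?y \<in> \<Pi>" using Suc by blast
    have y1: "(?f ^^ Suc n) d \<in> \<Pi>" unfolding Pd dart_orbit_def by blast
    have ys: "?y \<in> sdarts S" using yP Pm is_mapD(2)[OF m] by blast
    have "(stail S ?y, shead S ?y) \<in> ?R" using yP Pss unfolding skel_def by blast
    moreover have "stail S (?f ?y) = shead S ?y" using comb_sphereD(4)[OF cs] ys by blast
    ultimately have "(stail S ?y, stail S ((?f ^^ Suc n) d)) \<in> ?R" by simp
    then show ?case using Suc y1 by (meson rtrancl.rtrancl_into_rtrancl)
  qed
  show ?thesis
  proof
    fix x assume x: "x \<in> \<Pi>"
    then obtain n where xn: "x = (?f ^^ n) d" unfolding Pd dart_orbit_def by blast
    have "stail S x \<in> mverts M" using x Pm is_mapD(4)[OF m] by blast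
    then show "x \<in> {x \<in> ss_darts S M. stail S x \<in> compv S M (stail S d)}"
      using x Pss step[of n] xn unfolding compv_def by blast
  qed
qed



theorem proposition4p1:
  fixes S :: "('v, 'd) sphere" and M :: "('v, 'd) smap" and \<mu> :: real
  assumes "is_smap S M"
    and "\<forall>C\<in>ss_components S M. \<exists>N. comp_submap S M C N \<and> satisfies_X \<mu> S N"
  shows "real (card (sel_ext_edges S M)) \<ge> (1 - 2 * \<mu>) * (\<Sum>\<Pi>\<in>mfaces M. real (card \<Pi>))"
proof -
  have m: "is_map S M" using assms(1) unfolding is_smap_def by blast
  have cs: "comb_sphere S" using is_mapD(1)[OF m] .
  have finS: "finite (sdarts S)" using comb_sphereD(1)[OF cs] .
  have MS: "mdarts M \<subseteq> sdarts S" using is_mapD(2)[OF m] .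
  have finMd: "finite (mdarts M)" using MS finS finite_subset by blast
  have finMv: "finite (mverts M)"
  proof -
    have "mverts M \<subseteq> sphere_verts S" using m unfolding is_map_def by (elim conjE)
    moreover have "finite (sphere_verts S)" unfolding sphere_verts_def using finS by simp
    ultimately show ?thesis using finite_subset by blast
  qed
  define CC where "CC = ss_components S M"
  have finCC: "finite CC" unfolding CC_def ss_components_eq using finMv by simp
  define NN where "NN C = (SOME N. comp_submap S M C N \<and> satisfies_X \<mu> S N)" for C
  have NNp: "comp_submap S M C (NN C) \<and> satisfies_X \<mu> S (NN C)" if "C \<in> CC" for C
  proof -
    have "\<exists>N. comp_submap S M C N \<and> satisfies_X \<mu> S N" using assms(2) that unfolding CC_def by blast
    thus ?thesis unfolding NN_def by (rule someI_ex)
  qed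
  have Nd: "mdarts (NN C) = {d \<in> ss_darts S M. stail S d \<in> C}" if "C \<in> CC" for C
    using NNp[OF that] unfolding comp_submap_def by blast
  have Nf: "mfaces (NN C) = {\<Pi> \<in> mfaces M. \<Pi> \<subseteq> mdarts (NN C)}" if "C \<in> CC" for C
    using NNp[OF that] unfolding comp_submap_def by blast
  have Ns: "msel (NN C) \<subseteq> msel M" if "C \<in> CC" for C
    using NNp[OF that] unfolding comp_submap_def by blast
  have Nsm: "is_smap S (NN C)" if "C \<in> CC" for C
    using NNp[OF that] unfolding comp_submap_def by blast
  have NX: "satisfies_X \<mu> S (NN C)" if "C \<in> CC" for C
    using NNp[OF that] by blast
  have Nm: "is_map S (NN C)" if "C \<in> CC" for C
    using Nsm[OF that] unfolding is_smap_def by blast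
  have ssM: "ss_darts S M \<subseteq> mdarts M" unfolding ss_darts_def by blast
  have disjC: "C = C'" if "C \<in> CC" "C' \<in> CC" "x \<in> C" "x \<in> C'" for C C' x
    using comps_disj[OF m, of C C' x] that unfolding CC_def by blast
  have faceN: "\<Pi> \<in> mfaces (NN C)" if P: "\<Pi> \<in> mfaces M" and C: "C \<in> CC" and d: "d \<in> \<Pi>" "stail S d \<in> C" for \<Pi> C d
  proof -
    obtain v where v: "C = compv S M v" using C unfolding CC_def ss_components_eq by (rule imageE)
    have "compv S M (stail S d) = compv S M v" using compv_eq[OF m] d(2) v by blast
    hence eqC: "compv S M (stail S d) = C" using v by simp
    have "\<Pi> \<subseteq> mdarts (NN C)" using face_in_comp[OF m P d(1)] unfolding eqC Nd[OF C] .
    thus ?thesis using Nf[OF C] P by blast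
  qed
  have faces_nonempty: "\<Pi> \<noteq> {}" if PP: "\<Pi> \<in> mfaces M" for \<Pi>
  proof -
    obtain a where "\<Pi> = dart_orbit (snxt S) a"
      using PP is_mapD(5)[OF m] unfolding sphere_faces_def by blast
    hence "a \<in> \<Pi>" unfolding dart_orbit_def by (metis (mono_tags, lifting) funpow_0 mem_Collect_eq)
    thus ?thesis by blast
  qed
  have facesU: "mfaces M = (\<Union>C\<in>CC. mfaces (NN C))"
  proof
    show "mfaces M \<subseteq> (\<Union>C\<in>CC. mfaces (NN C))"
    proof
      fix \<Pi> assume P: "\<Pi> \<in> mfaces M"
      then obtain d where d: "d \<in> \<Pi>" using faces_nonempty by blast
      have dM: "d \<in> mdarts M" using P d is_mapD(6)[OF m] by blast
      have tv: "stail S d \<in> mverts M" using dM is_mapD(4)[OF m] by blast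
      let ?C = "compv S M (stail S d)"
      have CC: "?C \<in> CC" unfolding CC_def ss_components_eq using tv by (rule imageI)
      have "stail S d \<in> ?C" unfolding compv_def using tv by simp
      hence "\<Pi> \<in> mfaces (NN ?C)" using faceN[OF P CC d] by simp
      thus "\<Pi> \<in> (\<Union>C\<in>CC. mfaces (NN C))" using CC by blast
    qed
    show "(\<Union>C\<in>CC. mfaces (NN C)) \<subseteq> mfaces M" using Nf by blast
  qed
  have facesD: "mfaces (NN C) \<inter> mfaces (NN C') = {}" if "C \<in> CC" "C' \<in> CC" "C \<noteq> C'" for C C'
  proof (rule ccontr)
    assume "mfaces (NN C) \<inter> mfaces (NN C') \<noteq> {}"
    then obtain \<Pi> where P: "\<Pi> \<in> mfaces (NN C)" "\<Pi> \<in> mfaces (NN C')" by blast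
    have PM: "\<Pi> \<in> mfaces M" using P(1) Nf[OF that(1)] by blast
    obtain d where d: "d \<in> \<Pi>" using faces_nonempty[OF PM] by blast
    have "d \<in> mdarts (NN C)" "d \<in> mdarts (NN C')" using P d Nf[OF that(1)] Nf[OF that(2)] by blast+
    hence "stail S d \<in> C" "stail S d \<in> C'" using Nd[OF that(1)] Nd[OF that(2)] by blast+
    thus False using disjC[OF that(1,2)] that(3) by blast
  qed
  have finFM: "finite (mfaces M)"
  proof -
    have "mfaces M \<subseteq> Pow (mdarts M)" using is_mapD(6)[OF m] by blast
    thus ?thesis using finMd by (meson finite_Pow_iff finite_subset)
  qed
  have finFN: "finite (mfaces (NN C))" if "C \<in> CC" for C
    using finFM Nf[OF that] by simp
  have sumF: "(\<Sum>\<Pi>\<in>mfaces M. real (card \<Pi>)) = (\<Sum>C\<in>CC. \<Sum>\<Pi>\<in>mfaces (NN C). real (card \<Pi>))"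
    unfolding facesU by (rule sum.UNION_disjoint[OF finCC]) (use finFN facesD in blast)+
  have selsub: "sel_ext_edges S (NN C) \<subseteq> sel_ext_edges S M" if C: "C \<in> CC" for C
  proof
    fix e assume e: "e \<in> sel_ext_edges S (NN C)"
    obtain a where a: "e = {a, srev S a}" "a \<in> mdarts (NN C)"
      using e unfolding sel_ext_edges_def map_edges_def by blast
    have aM: "a \<in> mdarts M" using a(2) Nd[OF C] ssM by blast
    have em: "e \<in> map_edges S M" using a(1) aM unfolding map_edges_def by blast
    obtain d' where d': "d' \<in> e" "d' \<in> \<Union>(mfaces (NN C))" "[d'] \<in> msel (NN C)"
      using e unfolding sel_ext_edges_def by blast
    have d'M: "d' \<in> \<Union>(mfaces M)" "[d'] \<in> msel M" using d' Nf[OF C] Ns[OF C] by blast+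
    obtain x c where xc: "x \<in> e" "c \<in> set (mcontours (NN C))" "x \<in> set c"
      using e unfolding sel_ext_edges_def external_edge_def by blast
    have "closed_path S (mdarts (NN C)) c" using is_mapD(7)[OF Nm[OF C]] xc(2) by blast
    hence xN: "x \<in> mdarts (NN C)" using xc(3) unfolding closed_path_def by blast
    have xnf: "x \<notin> \<Union>(mfaces (NN C))" using on_contour_not_face[OF Nm[OF C] xN xc(2,3)] .
    have xC: "stail S x \<in> C" using xN Nd[OF C] by blast
    have xM: "x \<in> mdarts M" using xN Nd[OF C] ssM by blast
    have xnfM: "x \<notin> \<Union>(mfaces M)"
    proof
      assume "x \<in> \<Union>(mfaces M)"
      then obtain \<Pi> where "\<Pi> \<in> mfaces M" "x \<in> \<Pi>" by blast
      hence "\<Pi> \<in> mfaces (NN C)" using faceN[OF _ C _ xC] by blast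
      thus False using xnf \<open>x \<in> \<Pi>\<close> by blast
    qed
    have "(if x \<in> \<Union>(mfaces M) then 1 else 0) + (\<Sum>c\<leftarrow>mcontours M. count_list c x) = (1::nat)"
      using is_mapD(8)[OF m] xM by blast
    hence "(\<Sum>c\<leftarrow>mcontours M. count_list c x) = (1::nat)" using xnfM by (simp only: if_False add_0)
    hence "\<exists>c\<in>set (mcontours M). x \<in> set c" by (rule sum_count_pos)
    hence "external_edge S M e" unfolding external_edge_def using xc(1) by blast
    thus "e \<in> sel_ext_edges S M" unfolding sel_ext_edges_def using em d'(1) d'M by blast
  qed
  have selD: "sel_ext_edges S (NN C) \<inter> sel_ext_edges S (NN C') = {}" if "C \<in> CC" "C' \<in> CC" "C \<noteq> C'" for C C'
  proof (rule ccontr)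
    assume "sel_ext_edges S (NN C) \<inter> sel_ext_edges S (NN C') \<noteq> {}"
    then obtain e where e: "e \<in> sel_ext_edges S (NN C)" "e \<in> sel_ext_edges S (NN C')" by blast
    obtain a where a: "e = {a, srev S a}" "a \<in> mdarts (NN C)"
      using e(1) unfolding sel_ext_edges_def map_edges_def by blast
    obtain b where b: "e = {b, srev S b}" "b \<in> mdarts (NN C')"
      using e(2) unfolding sel_ext_edges_def map_edges_def by blast
    have "srev S b \<in> mdarts (NN C')" using is_mapD(3)[OF Nm[OF that(2)]] b(2) by blast
    moreover have "a \<in> {b, srev S b}" using a(1) b(1) by blast
    ultimately have aC': "a \<in> mdarts (NN C')" using b(2) by blast
    have "stail S a \<in> C" "stail S a \<in> C'" using a(2) aC' Nd[OF that(1)] Nd[OF that(2)] by blast+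
    thus False using disjC[OF that(1,2)] that(3) by blast
  qed
  have finSel: "finite (sel_ext_edges S M)"
  proof -
    have "finite (map_edges S M)" unfolding map_edges_def using finMd by simp
    thus ?thesis unfolding sel_ext_edges_def by simp
  qed
  have finSelN: "finite (sel_ext_edges S (NN C))" if "C \<in> CC" for C
    using finSel selsub[OF that] finite_subset by blast
  have cardU: "card (\<Union>C\<in>CC. sel_ext_edges S (NN C)) = (\<Sum>C\<in>CC. card (sel_ext_edges S (NN C)))"
    by (rule card_UN_disjoint[OF finCC]) (use finSelN selD in blast)+
  have cardle: "card (\<Union>C\<in>CC. sel_ext_edges S (NN C)) \<le> card (sel_ext_edges S M)"
    using selsub by (intro card_mono[OF finSel]) blast
  have "(1 - 2 * \<mu>) * (\<Sum>\<Pi>\<in>mfaces M. real (card \<Pi>))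
        = (\<Sum>C\<in>CC. (1 - 2 * \<mu>) * (\<Sum>\<Pi>\<in>mfaces (NN C). real (card \<Pi>)))"
    unfolding sumF by (rule sum_distrib_left)
  also have "\<dots> \<le> (\<Sum>C\<in>CC. real (card (sel_ext_edges S (NN C))))"
    by (rule sum_mono) (rule comp_bound[OF Nsm NX])
  also have "\<dots> = real (card (\<Union>C\<in>CC. sel_ext_edges S (NN C)))"
    unfolding cardU by simp
  also have "\<dots> \<le> real (card (sel_ext_edges S M))" using cardle by simp
  finally show ?thesis .
qed

end
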